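(* Let $k\ge2$, $n\ge k$, and $\beta=\sum_{i=1}^n i^{k-1}$. In the position-randomized auction setting described in the context, for every common initial bid sequence and every common permutation distribution used by the $k-1$ disadvantaged bidders, the adversary ${\mathcal A}$ has a position-randomized strategy under which the expected number of objects he wins is at least $\frac{\beta-1}{n^{k-1}}$.
   Context: Auction model: there are $k$ bidders, one adversary ${\mathcal A}$ and $k-1$ disadvantaged bidders, and $n$ objects auctioned simultaneously. Each object is won by the highest bidder on it; if $m$ bidders tie for the highest bid, each wins with probability $1/m$. A position-randomized bidding algorithm: a bidder chooses an initial sequence $x_1,\dots,x_n$ of positive reals with $\sum x_j\le 1$ (budget) and a probability distribution on permutations $\sigma$ of $\{1,\dots,n\}$; he draws $\sigma$ and bids $x_j$ on object $\sigma(j)$. All disadvantaged bidders use the same initial sequence and the same permutation distribution, drawing their permutations independently; ${\mathcal A}$ knows their algorithm, and his permutation is drawn independently of theirs. *)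

theory Defs
  imports "HOL-Probability.Probability" "HOL-Combinatorics.Permutations"
begin

text \<open>Objects are 0,...,n-1; positions j are 0,...,n-1. A permutation sigma
(sigma permutes {..<n}) places the bid x j on object sigma j, so the bid on
object o is x (inv sigma o).\<close>

definition perm_dist :: "nat \<Rightarrow> (nat \<Rightarrow> nat) pmf \<Rightarrow> bool" where
  "perm_dist n p \<longleftrightarrow> set_pmf p \<subseteq> {\<sigma>. \<sigma> permutes {..<n}}"

definition valid_bids :: "nat \<Rightarrow> (nat \<Rightarrow> real) \<Rightarrow> bool" where
  "valid_bids n x \<longleftrightarrow> (\<forall>j<n. x j > 0) \<and> (\<Sum>j<n. x j) \<le> 1"

definition win_share :: "real \<Rightarrow> real list \<Rightarrow> real" where
  "win_share a bs = (if (\<forall>b\<in>set bs. b \<le> a)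
     then 1 / real (1 + length (filter (\<lambda>b. b = a) bs)) else 0)"

text \<open>Expected number of objects won by the adversary (bids y, permutation
distribution q) against k-1 disadvantaged bidders each using bids x and an
independent permutation drawn from p.\<close>

definition expected_wins ::
  "nat \<Rightarrow> nat \<Rightarrow> (nat \<Rightarrow> real) \<Rightarrow> (nat \<Rightarrow> nat) pmf \<Rightarrow> (nat \<Rightarrow> real) \<Rightarrow> (nat \<Rightarrow> nat) pmf \<Rightarrow> real" where
  "expected_wins n k x p y q =
     measure_pmf.expectation (pair_pmf q (Pi_pmf {..<k-1} id (\<lambda>_. p)))
       (\<lambda>(\<rho>, \<sigma>s). \<Sum>obj<n. win_share (y (inv \<rho> obj)) (map (\<lambda>i. x (inv (\<sigma>s i) obj)) [0..<k-1]))"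

end

theory Submission
  imports Defs
begin

lemma mod_shift_back:
  fixes j c n :: nat
  assumes "c \<le> n" "j < n"
  shows "((j + c) mod n + (n - c)) mod n = j"
proof -
  have "((j + c) mod n + (n - c)) mod n = (j + c + (n - c)) mod n"
    by (simp add: mod_add_left_eq)
  also have "\<dots> = (j + n) mod n" using assms by simp
  also have "\<dots> = j" using assms by simp
  finally show ?thesis .
qed

lemma inj_mod_shift:
  fixes c n :: nat assumes "c \<le> n"
  shows "inj_on (\<lambda>j. (j + c) mod n) {..<n}"
proof (rule inj_on_inverseI[where g="\<lambda>j. (j + (n - c)) mod n"])
  fix j assume "j \<in> {..<n}"
  then show "((j + c) mod n + (n - c)) mod n = j" using mod_shift_back[OF assms] by simp
qed

lemma bij_mod_shift:
  fixes c n :: nat assumes "c \<le> n"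
  shows "bij_betw (\<lambda>j. (j + c) mod n) {..<n} {..<n}"
proof -
  have "(\<lambda>j. (j + c) mod n) ` {..<n} \<subseteq> {..<n}" by auto
  then show ?thesis
    using inj_mod_shift[OF assms] endo_inj_surj[of "{..<n}"] by (simp add: bij_betw_def)
qed

definition rot :: "nat \<Rightarrow> nat \<Rightarrow> nat \<Rightarrow> nat" where
  "rot n s = (\<lambda>j. if j < n then (j + (n - s)) mod n else j)"

lemma rot_permutes: assumes "s \<le> n" shows "rot n s permutes {..<n}"
proof (rule bij_imp_permutes)
  have b: "bij_betw (\<lambda>j. (j + (n - s)) mod n) {..<n} {..<n}" by (rule bij_mod_shift) simp
  have "bij_betw (rot n s) {..<n} {..<n} = bij_betw (\<lambda>j. (j + (n - s)) mod n) {..<n} {..<n}"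
    by (rule bij_betw_cong) (simp add: rot_def)
  then show "bij_betw (rot n s) {..<n} {..<n}" using b by simp
next
  fix x assume "x \<notin> {..<n}"
  then show "rot n s x = x" by (simp add: rot_def)
qed

lemma inv_rot: assumes "s \<le> n" "obj < n" shows "inv (rot n s) obj = (obj + s) mod n"
proof -
  have lt: "(obj + s) mod n < n" using assms by simp
  have "rot n s ((obj + s) mod n) = ((obj + s) mod n + (n - s)) mod n"
    using lt by (simp add: rot_def)
  also have "\<dots> = obj" by (rule mod_shift_back[OF assms])
  finally show ?thesis using permutes_inv_eq[OF rot_permutes[OF assms(1)]] by blast
qed

lemma sum_shift:
  fixes g :: "nat \<Rightarrow> real"
  assumes "obj < n"
  shows "(\<Sum>s<n. g ((obj + s) mod n)) = (\<Sum>j<n. g j)"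
proof -
  have "bij_betw (\<lambda>j. (j + obj) mod n) {..<n} {..<n}" by (rule bij_mod_shift) (use assms in simp)
  then have "(\<Sum>s<n. g ((s + obj) mod n)) = (\<Sum>j<n. g j)"
    by (rule sum.reindex_bij_betw)
  moreover have "(\<lambda>s. g ((obj + s) mod n)) = (\<lambda>s. g ((s + obj) mod n))"
    by (rule ext) (simp add: add.commute)
  ultimately show ?thesis by metis
qed

lemma expectation_pair_finite:
  fixes f :: "'a \<times> 'b \<Rightarrow> real"
  assumes "finite (set_pmf A)" "finite (set_pmf B)"
  shows "measure_pmf.expectation (pair_pmf A B) f =
         measure_pmf.expectation A (\<lambda>a. measure_pmf.expectation B (\<lambda>b. f (a, b)))"
proof -
  have "measure_pmf.expectation (pair_pmf A B) f = (\<Sum>ab\<in>set_pmf A \<times> set_pmf B. f ab * pmf (pair_pmf A B) ab)"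
    by (rule integral_measure_pmf_real) (use assms in auto)
  also have "\<dots> = (\<Sum>(a,b)\<in>set_pmf A \<times> set_pmf B. f (a, b) * (pmf A a * pmf B b))"
    by (rule sum.cong) (auto simp: pmf_pair)
  also have "\<dots> = (\<Sum>a\<in>set_pmf A. \<Sum>b\<in>set_pmf B. f (a, b) * (pmf A a * pmf B b))"
    by (simp add: sum.cartesian_product)
  also have "\<dots> = (\<Sum>a\<in>set_pmf A. (\<Sum>b\<in>set_pmf B. f (a, b) * pmf B b) * pmf A a)"
    by (simp add: sum_distrib_left sum_distrib_right mult_ac)
  also have "\<dots> = (\<Sum>a\<in>set_pmf A. measure_pmf.expectation B (\<lambda>b. f (a, b)) * pmf A a)"
    by (intro sum.cong refl arg_cong2[where f="(*)"] integral_measure_pmf_real[symmetric]) (use assms in auto)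
  also have "\<dots> = measure_pmf.expectation A (\<lambda>a. measure_pmf.expectation B (\<lambda>b. f (a, b)))"
    by (rule integral_measure_pmf_real[symmetric]) (use assms in auto)
  finally show ?thesis .
qed

lemma convex_pow_nonneg: "convex_on {0::real..} (\<lambda>x. x ^ m)"
proof (cases "even m")
  case True
  then show ?thesis using convex_power_even convex_on_subset by blast
next
  case False
  then show ?thesis using convex_power_odd by blast
qed

lemma jensen_pow:
  fixes a :: "'a \<Rightarrow> real"
  assumes "finite S" "S \<noteq> {}" "\<And>i. i \<in> S \<Longrightarrow> a i \<ge> 0"
  shows "real (card S) * ((\<Sum>i\<in>S. a i) / real (card S)) ^ m \<le> (\<Sum>i\<in>S. a i ^ m)"
proof -
  have c: "real (card S) > 0" using assms by (simp add: card_gt_0_iff)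
  have "((\<Sum>i\<in>S. (1 / real (card S)) *\<^sub>R a i)) ^ m \<le> (\<Sum>i\<in>S. (1 / real (card S)) * a i ^ m)"
    by (rule convex_on_sum[OF assms(1,2) convex_pow_nonneg]) (use assms c in auto)
  then have "((\<Sum>i\<in>S. a i) / real (card S)) ^ m \<le> (\<Sum>i\<in>S. a i ^ m) / real (card S)"
    by (simp add: sum_distrib_left[symmetric] sum_distrib_right[symmetric] sum_divide_distrib[symmetric] divide_inverse mult.commute)
  then show ?thesis using c by (simp add: field_simps)
qed


lemma rank_sum:
  fixes x :: "nat \<Rightarrow> real"
  assumes "finite S"
  shows "(\<Sum>i=1..card S. (real i + 1) ^ m) \<le> (\<Sum>j\<in>S. (real (card {i\<in>S. x i \<le> x j}) + 1) ^ m)"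
  using assms
proof (induction "card S" arbitrary: S)
  case 0
  then show ?case by simp
next
  case (Suc c S)
  then have ne: "S \<noteq> {}" by auto
  have "Max (x ` S) \<in> x ` S" using Suc.prems ne by (intro Max_in) auto
  then obtain M where M: "M \<in> S" "x M = Max (x ` S)" by auto
  have Mmax: "x j \<le> x M" if "j \<in> S" for j using M Suc.prems that by auto
  define S' where "S' = S - {M}"
  have fS': "finite S'" and cS': "c = card S'" using Suc.prems Suc.hyps(2) M by (auto simp: S'_def)
  have IH: "(\<Sum>i=1..c. (real i + 1) ^ m) \<le> (\<Sum>j\<in>S'. (real (card {i\<in>S'. x i \<le> x j}) + 1) ^ m)"
    using Suc.hyps(1)[OF cS' fS'] cS' by simp
  have eqM: "{i\<in>S. x i \<le> x M} = S" using Mmax by auto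
  have mono: "(\<Sum>j\<in>S'. (real (card {i\<in>S'. x i \<le> x j}) + 1) ^ m) \<le> (\<Sum>j\<in>S'. (real (card {i\<in>S. x i \<le> x j}) + 1) ^ m)"
  proof (rule sum_mono)
    fix j assume "j \<in> S'"
    have "card {i\<in>S'. x i \<le> x j} \<le> card {i\<in>S. x i \<le> x j}"
      by (rule card_mono) (use Suc.prems in \<open>auto simp: S'_def\<close>)
    then show "(real (card {i\<in>S'. x i \<le> x j}) + 1) ^ m \<le> (real (card {i\<in>S. x i \<le> x j}) + 1) ^ m"
      by (intro power_mono) auto
  qed
  define g where "g = (\<lambda>j. (real (card {i\<in>S. x i \<le> x j}) + 1) ^ m)"
  have "(\<Sum>j\<in>S. g j) = g M + (\<Sum>j\<in>S'. g j)"
    unfolding S'_def by (rule sum.remove[OF Suc.prems M(1)])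
  moreover have "g M = (real (card S) + 1) ^ m" unfolding g_def eqM ..
  ultimately have split: "(\<Sum>j\<in>S. (real (card {i\<in>S. x i \<le> x j}) + 1) ^ m) =
      (real (card S) + 1) ^ m + (\<Sum>j\<in>S'. (real (card {i\<in>S. x i \<le> x j}) + 1) ^ m)"
    unfolding g_def by simp
  have cS: "card S = Suc c" using Suc.hyps(2) by simp
  have top: "(\<Sum>i=1..card S. (real i + 1) ^ m) = (\<Sum>i=1..c. (real i + 1) ^ m) + (real (card S) + 1) ^ m"
    unfolding cS by (rule sum.cl_ivl_Suc[THEN trans]) simp
  show ?case using split top mono IH by linarith
qed

lemma shift_pow_sum: "(\<Sum>i=1..c. (real i + 1) ^ m) = (\<Sum>i=1..Suc c. real i ^ m) - 1"
proof (induction c)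
  case 0
  then show ?case by simp
next
  case (Suc c)
  then show ?case by (simp add: add.commute)
qed

lemma win_share_ge:
  assumes "\<And>b. b \<in> set bs \<Longrightarrow> b < a"
  shows "win_share a bs = 1"
proof -
  have "filter (\<lambda>b. b = a) bs = []" using assms by (auto simp: filter_empty_conv)
  then show ?thesis using assms by (auto simp: win_share_def less_imp_le)
qed

lemma win_share_nonneg: "win_share a bs \<ge> 0"
  by (simp add: win_share_def)

lemma win_share_prod:
  fixes f :: "nat \<Rightarrow> real"
  shows "(\<Prod>i<m. of_bool (f i < a)) \<le> win_share a (map f [0..<m])"
proof (cases "\<forall>i<m. f i < a")
  case True
  then have "win_share a (map f [0..<m]) = 1" by (intro win_share_ge) auto
  then show ?thesis using True by simp
next
  case False
  then obtain i where "i < m" "\<not> f i < a" by auto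
  then have "(\<Prod>i<m. of_bool (f i < a) :: real) = 0" by (intro prod_zero) auto
  then show ?thesis using win_share_nonneg[of a "map f [0..<m]"] by linarith
qed

theorem lemma4p2:
  fixes k n :: nat and x :: "nat \<Rightarrow> real" and p :: "(nat \<Rightarrow> nat) pmf"
  assumes "k \<ge> 2" and "n \<ge> k"
    and "valid_bids n x" and "perm_dist n p"
  shows "\<exists>y q. valid_bids n y \<and> perm_dist n q \<and>
           expected_wins n k x p y q \<ge>
             ((\<Sum>i=1..n. real i ^ (k - 1)) - 1) / real n ^ (k - 1)"
proof -
  define m where "m = k - 1"
  have m1: "m \<ge> 1" and n0: "n > 0" using assms(1,2) by (auto simp: m_def)
  have xpos: "\<And>j. j < n \<Longrightarrow> x j > 0" and xsum: "(\<Sum>j<n. x j) \<le> 1"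
    using assms(3) by (auto simp: valid_bids_def)
  have psupp: "\<And>\<sigma>. \<sigma> \<in> set_pmf p \<Longrightarrow> \<sigma> permutes {..<n}"
    using assms(4) by (auto simp: perm_dist_def)
  have finp: "finite (set_pmf p)"
    by (rule finite_subset[OF _ finite_permutations[of "{..<n}"]]) (use psupp in auto)
  have "Min (x ` {..<n}) \<in> x ` {..<n}" using n0 by (intro Min_in) auto
  then obtain j0 where j0: "j0 < n" "x j0 = Min (x ` {..<n})" by auto
  have j0min: "x j0 \<le> x j" if "j < n" for j using j0 that by auto
  have xj0: "x j0 > 0" using xpos[OF j0(1)] .
  define d where "d = x j0 / (2 * real n)"
  have d0: "d > 0" using xj0 n0 by (simp add: d_def)
  define y where "y = (\<lambda>j. if j = j0 then x j0 / 2 else x j + d)"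
  define q where "q = map_pmf (rot n) (pmf_of_set {..<n})"
  define S where "S = {..<n} - {j0}"
  have finS: "finite S" and cardS: "card S = n - 1" using j0 by (auto simp: S_def)
  have vy: "valid_bids n y"
  proof -
    have "\<forall>j<n. y j > 0" using xpos xj0 d0 by (auto simp: y_def intro: add_pos_pos)
    moreover have "(\<Sum>j<n. y j) \<le> 1"
    proof -
      have "(\<Sum>j<n. y j) = y j0 + (\<Sum>j\<in>S. y j)"
        using sum.remove[of "{..<n}" j0 y] j0 by (simp add: S_def)
      also have "(\<Sum>j\<in>S. y j) = (\<Sum>j\<in>S. x j) + real (n - 1) * d"
        by (simp add: y_def S_def sum.distrib cardS[unfolded S_def])
      also have "(\<Sum>j<n. x j) = x j0 + (\<Sum>j\<in>S. x j)"
        using sum.remove[of "{..<n}" j0 x] j0 by (simp add: S_def)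
      moreover have "real (n - 1) * d \<le> x j0 / 2"
      proof -
        have "real (n - 1) * d \<le> real n * d" using d0 by (intro mult_right_mono) auto
        also have "\<dots> = x j0 / 2" using n0 by (simp add: d_def)
        finally show ?thesis .
      qed
      ultimately show ?thesis using xsum by (simp add: y_def)
    qed
    ultimately show ?thesis by (simp add: valid_bids_def)
  qed
  have ne: "{..<n} \<noteq> {}" using n0 by auto
  have setq: "set_pmf q = rot n ` {..<n}" using ne by (simp add: q_def set_pmf_of_set)
  have vq: "perm_dist n q"
    unfolding perm_dist_def setq using rot_permutes by auto
  define P where "P = Pi_pmf {..<m} id (\<lambda>_. p)"
  have finP: "finite (set_pmf P)"
    unfolding P_def by (subst set_Pi_pmf) (use finp in auto)
  have finq: "finite (set_pmf q)" by (simp add: setq)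
  define W where "W = (\<lambda>(\<rho>, \<sigma>s). \<Sum>obj<n. win_share (y (inv \<rho> obj)) (map (\<lambda>i. x (inv (\<sigma>s i) obj)) [0..<m]))"
  define L where "L = (\<lambda>(\<rho>::nat\<Rightarrow>nat, \<sigma>s::nat\<Rightarrow>nat\<Rightarrow>nat). \<Sum>obj<n. \<Prod>i<m. (of_bool (x (inv (\<sigma>s i) obj) < y (inv \<rho> obj)) :: real))"
  define F where "F = (\<lambda>obj t. measure_pmf.expectation p (\<lambda>\<sigma>. (of_bool (x (inv \<sigma> obj) < t) :: real)))"
  define N where "N = (\<lambda>t. (\<Sum>i<n. (of_bool (x i < t) :: real)))"
  have F0: "F obj t \<ge> 0" for obj t unfolding F_def by (intro integral_nonneg_AE) auto
  have sumF: "(\<Sum>obj<n. F obj t) = N t" for t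
  proof -
    have "(\<Sum>obj<n. F obj t) = measure_pmf.expectation p (\<lambda>\<sigma>. \<Sum>obj<n. (of_bool (x (inv \<sigma> obj) < t) :: real))"
      unfolding F_def
      by (rule Bochner_Integration.integral_sum[symmetric, where f="\<lambda>obj \<sigma>. (of_bool (x (inv \<sigma> obj) < t) :: real)"])
         (use finp integrable_measure_pmf_finite in auto)
    also have "\<dots> = measure_pmf.expectation p (\<lambda>\<sigma>. N t)"
    proof (rule integral_cong_AE)
      show "AE \<sigma> in measure_pmf p. (\<Sum>obj<n. (of_bool (x (inv \<sigma> obj) < t) :: real)) = N t"
      proof (rule AE_pmfI)
        fix \<sigma> assume "\<sigma> \<in> set_pmf p"
        then have "bij_betw (inv \<sigma>) {..<n} {..<n}"
          using psupp permutes_inv permutes_imp_bij by blast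
        then show "(\<Sum>obj<n. (of_bool (x (inv \<sigma> obj) < t) :: real)) = N t"
          unfolding N_def by (rule sum.reindex_bij_betw)
      qed
    qed auto
    also have "\<dots> = N t" by simp
    finally show ?thesis .
  qed
  have step_b: "measure_pmf.expectation (pair_pmf q P) L \<le> measure_pmf.expectation (pair_pmf q P) W"
  proof (rule integral_mono)
    show "integrable (measure_pmf (pair_pmf q P)) L" "integrable (measure_pmf (pair_pmf q P)) W"
      using finq finP by (auto intro!: integrable_measure_pmf_finite)
    fix z show "L z \<le> W z"
      unfolding L_def W_def by (cases z) (auto intro!: sum_mono win_share_prod)
  qed
  have inner: "measure_pmf.expectation P (\<lambda>\<sigma>s. L (\<rho>, \<sigma>s)) = (\<Sum>obj<n. F obj (y (inv \<rho> obj)) ^ m)" for \<rho>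
  proof -
    have "measure_pmf.expectation P (\<lambda>\<sigma>s. L (\<rho>, \<sigma>s)) =
        (\<Sum>obj<n. measure_pmf.expectation P (\<lambda>\<sigma>s. \<Prod>i<m. (of_bool (x (inv (\<sigma>s i) obj) < y (inv \<rho> obj)) :: real)))"
      unfolding L_def
      by (simp only: prod.case,
          rule Bochner_Integration.integral_sum[where f="\<lambda>obj \<sigma>s. \<Prod>i<m. (of_bool (x (inv (\<sigma>s i) obj) < y (inv \<rho> obj)) :: real)"])
         (use finP integrable_measure_pmf_finite in auto)
    also have "\<dots> = (\<Sum>obj<n. F obj (y (inv \<rho> obj)) ^ m)"
    proof (rule sum.cong[OF refl])
      fix obj
      have "measure_pmf.expectation P (\<lambda>\<sigma>s. \<Prod>i<m. (of_bool (x (inv (\<sigma>s i) obj) < y (inv \<rho> obj)) :: real))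
          = (\<Prod>i<m. F obj (y (inv \<rho> obj)))"
        unfolding P_def F_def
        by (rule expectation_prod_Pi_pmf[where f="\<lambda>_ \<sigma>. (of_bool (x (inv \<sigma> obj) < y (inv \<rho> obj)) :: real)"])
           (use finp integrable_measure_pmf_finite in auto)
      then show "measure_pmf.expectation P (\<lambda>\<sigma>s. \<Prod>i<m. (of_bool (x (inv (\<sigma>s i) obj) < y (inv \<rho> obj)) :: real))
          = F obj (y (inv \<rho> obj)) ^ m" by simp
    qed
    finally show ?thesis .
  qed
  have step_e: "measure_pmf.expectation q (\<lambda>\<rho>. \<Sum>obj<n. F obj (y (inv \<rho> obj)) ^ m)
      = (\<Sum>j<n. \<Sum>obj<n. F obj (y j) ^ m) / real n"
  proof -
    have "measure_pmf.expectation q (\<lambda>\<rho>. \<Sum>obj<n. F obj (y (inv \<rho> obj)) ^ m)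
        = (\<Sum>s<n. \<Sum>obj<n. F obj (y (inv (rot n s) obj)) ^ m) / real n"
      unfolding q_def integral_map_pmf by (subst integral_pmf_of_set) (use ne in auto)
    also have "(\<Sum>s<n. \<Sum>obj<n. F obj (y (inv (rot n s) obj)) ^ m) = (\<Sum>s<n. \<Sum>obj<n. F obj (y ((obj + s) mod n)) ^ m)"
      by (intro sum.cong refl) (simp add: inv_rot)
    also have "\<dots> = (\<Sum>obj<n. \<Sum>s<n. F obj (y ((obj + s) mod n)) ^ m)"
      by (rule sum.swap)
    also have "\<dots> = (\<Sum>obj<n. \<Sum>j<n. F obj (y j) ^ m)"
    proof (rule sum.cong[OF refl])
      fix obj assume "obj \<in> {..<n}"
      then show "(\<Sum>s<n. F obj (y ((obj + s) mod n)) ^ m) = (\<Sum>j<n. F obj (y j) ^ m)"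
        using sum_shift[of obj n "\<lambda>j. F obj (y j) ^ m"] by simp
    qed
    also have "\<dots> = (\<Sum>j<n. \<Sum>obj<n. F obj (y j) ^ m)"
      by (rule sum.swap)
    finally show ?thesis .
  qed
  have step_h: "(\<Sum>j<n. N (y j) ^ m) / real n ^ m \<le> (\<Sum>j<n. \<Sum>obj<n. F obj (y j) ^ m) / real n"
  proof -
    have "real n * (N (y j) / real n) ^ m \<le> (\<Sum>obj<n. F obj (y j) ^ m)" for j
      using jensen_pow[of "{..<n}" "\<lambda>obj. F obj (y j)" m] n0 F0 sumF by auto
    then have "(\<Sum>j<n. real n * (N (y j) / real n) ^ m) \<le> (\<Sum>j<n. \<Sum>obj<n. F obj (y j) ^ m)"
      by (intro sum_mono)
    moreover have "(\<Sum>j<n. real n * (N (y j) / real n) ^ m) = real n * ((\<Sum>j<n. N (y j) ^ m) / real n ^ m)"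
      by (simp add: power_divide sum_distrib_left sum_divide_distrib)
    ultimately have "real n * ((\<Sum>j<n. N (y j) ^ m) / real n ^ m) \<le> (\<Sum>j<n. \<Sum>obj<n. F obj (y j) ^ m)"
      by simp
    then show ?thesis using n0 by (simp add: field_simps)
  qed
  have step_j: "(\<Sum>i=1..n. real i ^ m) - 1 \<le> (\<Sum>j<n. N (y j) ^ m)"
  proof -
    have N0: "N t \<ge> 0" for t unfolding N_def by (intro sum_nonneg) auto
    have "(\<Sum>i=1..n. real i ^ m) - 1 = (\<Sum>i=1..card S. (real i + 1) ^ m)"
      using shift_pow_sum[where c="n - 1" and m=m] n0 cardS by simp
    also have "\<dots> \<le> (\<Sum>j\<in>S. (real (card {i\<in>S. x i \<le> x j}) + 1) ^ m)"
      by (rule rank_sum[OF finS])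
    also have "\<dots> \<le> (\<Sum>j\<in>S. N (y j) ^ m)"
    proof (rule sum_mono)
      fix j assume jS: "j \<in> S"
      then have jn: "j < n" "j \<noteq> j0" by (auto simp: S_def)
      have "insert j0 {i\<in>S. x i \<le> x j} \<subseteq> {i\<in>{..<n}. x i < y j}"
        using jn j0(1) j0min[OF jn(1)] d0 by (auto simp: S_def y_def)
      then have "card (insert j0 {i\<in>S. x i \<le> x j}) \<le> card {i\<in>{..<n}. x i < y j}"
        by (intro card_mono) auto
      moreover have "card (insert j0 {i\<in>S. x i \<le> x j}) = card {i\<in>S. x i \<le> x j} + 1"
        using finS by (subst card_insert_disjoint) (auto simp: S_def)
      moreover have "N (y j) = real (card {i\<in>{..<n}. x i < y j})"
        unfolding N_def by (simp add: sum_of_bool_eq Int_def)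
      ultimately have "real (card {i\<in>S. x i \<le> x j}) + 1 \<le> N (y j)" by simp
      then show "(real (card {i\<in>S. x i \<le> x j}) + 1) ^ m \<le> N (y j) ^ m"
        by (intro power_mono) auto
    qed
    also have "\<dots> \<le> (\<Sum>j<n. N (y j) ^ m)"
      by (rule sum_mono2) (use N0 in \<open>auto simp: S_def\<close>)
    finally show ?thesis .
  qed
  have ew: "expected_wins n k x p y q = measure_pmf.expectation (pair_pmf q P) W"
    unfolding expected_wins_def W_def P_def m_def by simp
  have "((\<Sum>i=1..n. real i ^ m) - 1) / real n ^ m \<le> (\<Sum>j<n. N (y j) ^ m) / real n ^ m"
    using step_j n0 by (intro divide_right_mono) auto
  also have "\<dots> \<le> (\<Sum>j<n. \<Sum>obj<n. F obj (y j) ^ m) / real n" by (rule step_h)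
  also have "\<dots> = measure_pmf.expectation q (\<lambda>\<rho>. measure_pmf.expectation P (\<lambda>\<sigma>s. L (\<rho>, \<sigma>s)))"
    by (simp add: inner step_e)
  also have "\<dots> = measure_pmf.expectation (pair_pmf q P) L"
    by (rule expectation_pair_finite[symmetric, OF finq finP])
  also have "\<dots> \<le> expected_wins n k x p y q" using step_b ew by simp
  finally show ?thesis using vy vq unfolding m_def by blast
qed

end
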